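(* Let $0<q<1$. Define the $q$-Genocchi numbers $g_{n,q}$ and $q$-Genocchi polynomials $G_{n,q}(x)$ by \[ \frac{2t}{e_q(t)+1}=\sum_{n=0}^\infty g_{n,q}\frac{t^n}{[n]_q!},\qquad \frac{2t}{e_q(t)+1}e_q(tx)=\sum_{n=0}^\infty G_{n,q}(x)\frac{t^n}{[n]_q!} \] (for $t$ in a neighborhood of $0$). Then for every integer $n\ge1$, \[ \frac{1}{2q}\sum_{k=0}^{n-2}\begin{bmatrix}n\\k\end{bmatrix}_q g_{n-k,q}\,q^kG_{k,q}(x)+[n]_q\left(xq-\frac{1}{2q}\right)q^{n-1}G_{n-1,q}(x)+q^{n-1}G_{n,q}(x)-[n]_qG_{n,q}(qx)=0. \]
   Context: $[n]_q=\frac{1-q^n}{1-q}$, $[0]_q!=1$, $[n]_q!=[n]_q\cdots[1]_q$, $\begin{bmatrix}n\\k\end{bmatrix}_q=\frac{[n]_q!}{[k]_q![n-k]_q!}$, and $e_q(t)=\sum_{n\ge0}\frac{t^n}{[n]_q!}$. *)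

theory Defs
  imports Complex_Main
begin

definition qint :: "real \<Rightarrow> nat \<Rightarrow> real" where
  "qint q n = (1 - q ^ n) / (1 - q)"

definition qfact :: "real \<Rightarrow> nat \<Rightarrow> real" where
  "qfact q n = (\<Prod>k\<in>{1..n}. qint q k)"

definition qbinom :: "real \<Rightarrow> nat \<Rightarrow> nat \<Rightarrow> real" where
  "qbinom q n k = qfact q n / (qfact q k * qfact q (n - k))"

definition qexp :: "real \<Rightarrow> real \<Rightarrow> real" where
  "qexp q t = (\<Sum>n. t ^ n / qfact q n)"

definition qgenocchi_num :: "real \<Rightarrow> nat \<Rightarrow> real" where
  "qgenocchi_num q = (THE c. \<exists>e>0. \<forall>t. \<bar>t\<bar> < e \<longrightarrow>
      (\<lambda>n. c n * t ^ n / qfact q n) sums (2 * t / (qexp q t + 1)))"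

definition qgenocchi_poly :: "real \<Rightarrow> nat \<Rightarrow> real \<Rightarrow> real" where
  "qgenocchi_poly q n x = (THE c. \<exists>e>0. \<forall>t. \<bar>t\<bar> < e \<longrightarrow>
      (\<lambda>n. c n * t ^ n / qfact q n) sums (2 * t / (qexp q t + 1) * qexp q (t * x))) n"

end

theory Submission
  imports Defs "HOL-Analysis.FPS_Convergence"
begin

lemma powser_unique0:
  fixes d :: "nat \<Rightarrow> real"
  assumes e: "e > 0" and S: "\<And>t. \<bar>t\<bar> < e \<Longrightarrow> (\<lambda>n. d n * t ^ n) sums 0"
  shows "d n = 0"
proof -
  have "\<forall>t. t \<noteq> 0 \<and> \<bar>t\<bar> < e \<longrightarrow> (\<lambda>n. d (n + m) * t ^ n) sums 0" for m
  proof (induction m)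
    case 0 then show ?case using S by simp
  next
    case (Suc m)
    have dm: "d m = 0"
    proof -
      have "((\<lambda>t::real. 0::real) \<longlongrightarrow> d (0 + m)) (at 0)"
        by (rule powser_limit_0_strong[OF e, of "\<lambda>n. d (n+m)"]) (use Suc in auto)
      then show ?thesis using LIM_const_eq by fastforce
    qed
    show ?case
    proof (intro allI impI)
      fix t :: real assume t: "t \<noteq> 0 \<and> \<bar>t\<bar> < e"
      have "(\<lambda>n. d (n + m) * t ^ n) sums 0" using Suc t by blast
      then have "(\<lambda>n. d (Suc n + m) * t ^ (Suc n)) sums 0"
        using dm by (subst sums_Suc_iff) simp
      then have "(\<lambda>n. (d (Suc n + m) * t ^ (Suc n)) * (1/t)) sums (0 * (1/t))"
        by (rule sums_mult2)
      then show "(\<lambda>n. d (n + Suc m) * t ^ n) sums 0" using t by (simp add: field_simps)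
    qed
  qed
  from this[of n] have "((\<lambda>t::real. 0::real) \<longlongrightarrow> d (0 + n)) (at 0)"
    by (intro powser_limit_0_strong[OF e, of "\<lambda>k. d (k+n)"]) auto
  then show ?thesis using LIM_const_eq by fastforce
qed

lemma qint_ge1: assumes "0 < q" "q < 1" "1 \<le> n" shows "1 \<le> qint q n"
proof -
  have "q ^ n \<le> q ^ 1" using assms by (intro power_decreasing) auto
  then show ?thesis using assms by (simp add: qint_def field_simps)
qed

lemma qfact_ge1: assumes "0 < q" "q < 1" shows "1 \<le> qfact q n"
  unfolding qfact_def by (rule prod_ge_1) (use qint_ge1[OF assms] in auto)

lemma qfact_nz: assumes "0 < q" "q < 1" shows "qfact q n \<noteq> 0"
  using qfact_ge1[OF assms, of n] by auto

lemma qfact_Suc: "qfact q (Suc n) = qint q (Suc n) * qfact q n"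
  by (simp add: qfact_def prod.nat_ivl_Suc' mult.commute)

lemma qfact_0 [simp]: "qfact q 0 = 1" by (simp add: qfact_def)
lemma qfact_1: "q \<noteq> 1 \<Longrightarrow> qfact q 1 = 1" by (simp add: qfact_def qint_def)

lemma THE_coef:
  fixes f :: "real \<Rightarrow> real"
  assumes nz: "\<And>n. qfact q n \<noteq> 0" and F: "f has_fps_expansion F"
  shows "(THE c. \<exists>e>0. \<forall>t. \<bar>t\<bar> < e \<longrightarrow> (\<lambda>n. c n * t ^ n / qfact q n) sums f t)
         = (\<lambda>n. qfact q n * fps_nth F n)"
proof -
  let ?P = "\<lambda>c. \<exists>e>0. \<forall>t. \<bar>t\<bar> < e \<longrightarrow> (\<lambda>n. c n * t ^ n / qfact q n) sums f t"
  have R: "fps_conv_radius F > 0" and ev: "eventually (\<lambda>z. eval_fps F z = f z) (nhds 0)"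
    using F by (auto simp: has_fps_expansion_def)
  obtain r where r: "0 < ereal r" "ereal r < fps_conv_radius F" using ereal_dense2[OF R] by blast
  obtain d where d: "d > 0" "\<And>z. dist z 0 < d \<Longrightarrow> eval_fps F z = f z"
    using ev unfolding eventually_nhds_metric by blast
  have ex: "?P (\<lambda>n. qfact q n * fps_nth F n)"
  proof (intro exI[of _ "min d r"] conjI allI impI)
    show "0 < min d r" using d r by auto
    fix t :: real assume t: "\<bar>t\<bar> < min d r"
    have "ereal \<bar>t\<bar> < ereal r" using t by simp
    then have "norm t < fps_conv_radius F" using r(2) by (metis less_trans real_norm_def)
    from sums_eval_fps[OF this] have "(\<lambda>n. fps_nth F n * t ^ n) sums f t"
      using d t by auto
    then show "(\<lambda>n. qfact q n * fps_nth F n * t ^ n / qfact q n) sums f t"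
      using nz by simp
  qed
  have un: "c = (\<lambda>n. qfact q n * fps_nth F n)" if "?P c" for c
  proof
    fix n
    from that obtain e1 where e1: "e1 > 0" "\<And>t. \<bar>t\<bar> < e1 \<Longrightarrow> (\<lambda>n. c n * t ^ n / qfact q n) sums f t"
      by blast
    from ex obtain e2 where e2: "e2 > 0" "\<And>t. \<bar>t\<bar> < e2 \<Longrightarrow> (\<lambda>n. qfact q n * fps_nth F n * t ^ n / qfact q n) sums f t"
      by blast
    have "(c n - qfact q n * fps_nth F n) / qfact q n = 0"
    proof (rule powser_unique0[of "min e1 e2"])
      show "min e1 e2 > 0" using e1 e2 by auto
      fix t :: real assume t: "\<bar>t\<bar> < min e1 e2"
      have "(\<lambda>n. c n * t ^ n / qfact q n - qfact q n * fps_nth F n * t ^ n / qfact q n) sums (f t - f t)"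
        using e1(2)[of t] e2(2)[of t] t by (intro sums_diff) auto
      then show "(\<lambda>n. (c n - qfact q n * fps_nth F n) / qfact q n * t ^ n) sums 0"
        using nz by (simp add: field_simps)
    qed
    then show "c n = qfact q n * fps_nth F n" using nz[of n] by simp
  qed
  show ?thesis using ex un by (intro the_equality) auto
qed

definition dil :: "real \<Rightarrow> real fps \<Rightarrow> real fps" where
  "dil c F = Abs_fps (\<lambda>n. c ^ n * fps_nth F n)"

definition EE :: "real \<Rightarrow> real fps" where
  "EE q = Abs_fps (\<lambda>n. 1 / qfact q n)"

lemma exp_expansion:
  assumes q: "0 < q" "q < 1"
  shows "(\<lambda>t. qexp q (t * x)) has_fps_expansion dil x (EE q)"
  unfolding has_fps_expansion_def
proof
  define z :: real where "z = 1 / (2 * (\<bar>x\<bar> + 1))"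
  have z: "z > 0" "\<bar>x\<bar> * z \<le> 1/2" unfolding z_def by (auto simp: field_simps)
  have "summable (\<lambda>n. fps_nth (dil x (EE q)) n * z ^ n)"
  proof (rule summable_comparison_test)
    show "summable (\<lambda>n. (1/2::real) ^ n)" by simp
    show "\<exists>N. \<forall>n\<ge>N. norm (fps_nth (dil x (EE q)) n * z ^ n) \<le> (1/2) ^ n"
    proof (intro exI allI impI)
      fix n :: nat
      have "norm (fps_nth (dil x (EE q)) n * z ^ n) = (\<bar>x\<bar> * z) ^ n / qfact q n"
        using qfact_ge1[OF q, of n] z
        by (simp add: dil_def EE_def abs_mult power_abs power_mult_distrib)
      also have "\<dots> \<le> (\<bar>x\<bar> * z) ^ n"
        proof -
        have "(\<bar>x\<bar> * z) ^ n * 1 \<le> (\<bar>x\<bar> * z) ^ n * qfact q n"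
          using qfact_ge1[OF q, of n] z by (intro mult_left_mono) auto
        then show ?thesis using qfact_ge1[OF q, of n] by (simp add: divide_le_eq)
      qed
      also have "\<dots> \<le> (1/2) ^ n" using z by (intro power_mono) auto
      finally show "norm (fps_nth (dil x (EE q)) n * z ^ n) \<le> (1/2) ^ n" .
    qed
  qed
  then have "ereal (norm z) \<le> fps_conv_radius (dil x (EE q))"
    unfolding fps_conv_radius_def by (rule conv_radius_geI)
  moreover have "ereal 0 < ereal (norm z)" using z by simp
  ultimately show "0 < fps_conv_radius (dil x (EE q))" unfolding zero_ereal_def
    by (metis less_le_trans real_norm_def)
  show "\<forall>\<^sub>F t in nhds 0. eval_fps (dil x (EE q)) t = qexp q (t * x)"
    by (intro always_eventually allI)
       (simp add: eval_fps_def qexp_def dil_def EE_def power_mult_distrib field_simps)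
qed

lemma exp_expansion1:
  assumes q: "0 < q" "q < 1"
  shows "qexp q has_fps_expansion EE q"
proof -
  have "dil 1 (EE q) = EE q" by (rule fps_ext) (simp add: dil_def)
  then show ?thesis using exp_expansion[OF q, of 1] by simp
qed

lemma EE_0: "fps_nth (EE q) 0 = 1" by (simp add: EE_def)
lemma EE1_0: "fps_nth (EE q + 1) 0 = 2" by (simp add: EE_def)

definition AA :: "real \<Rightarrow> real fps" where
  "AA q = fps_const 2 * fps_X * inverse (EE q + 1)"

lemma A_expansion:
  assumes q: "0 < q" "q < 1"
  shows "(\<lambda>t. 2 * t / (qexp q t + 1)) has_fps_expansion AA q"
proof -
  have i: "(\<lambda>t. inverse (qexp q t + 1)) has_fps_expansion inverse (EE q + 1)"
    by (rule has_fps_expansion_inverse[OF has_fps_expansion_add[OF exp_expansion1[OF q] has_fps_expansion_1]])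
       (simp add: EE_0)
  have "(\<lambda>t. (2 * t) * inverse (qexp q t + 1)) has_fps_expansion AA q"
    unfolding AA_def
    by (intro has_fps_expansion_mult[OF _ i] has_fps_expansion_cmult_left has_fps_expansion_fps_X)
  then show ?thesis by (simp add: divide_inverse)
qed

lemma num_eq:
  assumes q: "0 < q" "q < 1"
  shows "qgenocchi_num q = (\<lambda>n. qfact q n * fps_nth (AA q) n)"
  unfolding qgenocchi_num_def
  by (rule THE_coef[OF qfact_nz[OF q] A_expansion[OF q]])

lemma poly_eq:
  assumes q: "0 < q" "q < 1"
  shows "qgenocchi_poly q n x = qfact q n * fps_nth (AA q * dil x (EE q)) n"
proof -
  have "(\<lambda>t. 2 * t / (qexp q t + 1) * qexp q (t * x)) has_fps_expansion AA q * dil x (EE q)"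
    by (rule has_fps_expansion_mult[OF A_expansion[OF q] exp_expansion[OF q]])
  then show ?thesis unfolding qgenocchi_poly_def
    by (subst THE_coef[OF qfact_nz[OF q]]) auto
qed

lemma dil_nth [simp]: "fps_nth (dil c F) n = c ^ n * fps_nth F n"
  by (simp add: dil_def)

lemma dil_add: "dil c (F + G) = dil c F + dil c G"
  by (rule fps_ext) (simp add: algebra_simps)

lemma dil_diff: "dil c (F - G) = dil c F - dil c G"
  by (rule fps_ext) (simp add: algebra_simps)

lemma dil_mult: "dil c (F * G) = dil c F * dil c G"
proof (rule fps_ext)
  fix n
  have "c ^ n * (\<Sum>i=0..n. fps_nth F i * fps_nth G (n - i))
        = (\<Sum>i=0..n. c ^ i * fps_nth F i * (c ^ (n - i) * fps_nth G (n - i)))"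
    unfolding sum_distrib_left
  proof (rule sum.cong)
    fix i assume "i \<in> {0..n}"
    then have "c ^ n = c ^ i * c ^ (n - i)" by (simp flip: power_add)
    then show "c ^ n * (fps_nth F i * fps_nth G (n - i)) = c ^ i * fps_nth F i * (c ^ (n - i) * fps_nth G (n - i))"
      by simp
  qed simp
  then show "fps_nth (dil c (F * G)) n = fps_nth (dil c F * dil c G) n"
    by (simp add: fps_mult_nth)
qed

lemma dil_const: "dil c (fps_const a) = fps_const a"
  by (rule fps_ext) simp

lemma dil_one: "dil c 1 = 1"
  by (rule fps_ext) simp

lemma dil_X: "dil c fps_X = fps_const c * fps_X"
  by (rule fps_ext) (simp add: fps_X_def)

lemma dil_dil: "dil a (dil b F) = dil (a * b) F"
  by (rule fps_ext) (simp add: power_mult_distrib)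

lemma EE_qdiff:
  assumes q: "0 < q" "q < 1"
  shows "EE q - dil q (EE q) = (1 - fps_const q) * fps_X * EE q"
proof (rule fps_ext)
  fix n
  show "fps_nth (EE q - dil q (EE q)) n = fps_nth ((1 - fps_const q) * fps_X * EE q) n"
  proof (cases n)
    case 0 then show ?thesis by (simp add: EE_def)
  next
    case (Suc m)
    have e1: "(1 - fps_const q) * fps_X * EE q = fps_const (1 - q) * (fps_X * EE q)"
      by (simp add: mult.assoc)
    have "1 - q ^ Suc m \<noteq> 0" using q
      using power_Suc_less_one[OF q, of m] by simp
    have r: "fps_nth ((1 - fps_const q) * fps_X * EE q) n = (1 - q) / qfact q m"
      unfolding e1 using Suc by (simp add: EE_def)
    have l: "fps_nth (EE q - dil q (EE q)) n = (1 - q ^ Suc m) / qfact q (Suc m)"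
      using Suc by (simp add: EE_def diff_divide_distrib)
    have qs: "qfact q (Suc m) = (1 - q ^ Suc m) / (1 - q) * qfact q m"
      by (simp add: qfact_Suc qint_def)
    have "(1 - q ^ Suc m) / qfact q (Suc m) = (1 - q ^ Suc m) / ((1 - q ^ Suc m) / (1 - q) * qfact q m)"
      by (simp only: qs)
    also have "\<dots> = (1 - q) / qfact q m"
      using \<open>1 - q ^ Suc m \<noteq> 0\<close> q qfact_nz[OF q, of m] by (simp add: divide_simps)
    finally have "(1 - q ^ Suc m) / qfact q (Suc m) = (1 - q) / qfact q m" .
    then show ?thesis using l r by simp
  qed
qed

lemma AA_mult:
  assumes q: "0 < q" "q < 1"
  shows "AA q * (EE q + 1) = 2 * fps_X"
proof -
  have "inverse (EE q + 1) * (EE q + 1) = 1" by (rule inverse_mult_eq_1) (simp add: EE_0)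
  then have "AA q * (EE q + 1) = fps_const 2 * fps_X" unfolding AA_def
    by (simp add: mult.assoc)
  then show ?thesis by (simp add: numeral_fps_const)
qed

lemma K_alg:
  fixes A B dA dB E dE Q X :: "'a::idom"
  assumes "A * B = 2 * X" "dA * dB = 2 * (Q * X)" "E - dE = (1 - Q) * X * E"
    "B = E + 1" "dB = dE + 1" "B * dB \<noteq> 0"
  shows "(1 - Q) * dA * (A - 2 * X + 2) = 2 * Q * (A - dA)"
proof -
  have "((1 - Q) * dA * (A - 2 * X + 2)) * (B * dB) = (2 * Q * (A - dA)) * (B * dB)"
    using assms(1-5) by algebra
  then show ?thesis using assms(6) by simp
qed

lemma T_alg:
  fixes A dA F dF Q X Cx :: "'a::comm_ring_1"
  assumes K: "(1 - Q) * dA * (A - 2 * X + 2) = 2 * Q * (A - dA)"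
    and Fid: "F - dF = (1 - Q) * (Q * Cx * X) * F"
  shows "(1 - Q) * ((dA * F) * A - 2 * X * (dA * F) + 2 * Cx * Q ^ 2 * X * (dA * F) + 2 * (dA * F))
         = 2 * Q * (A * F - dA * dF)"
proof -
  have "(1 - Q) * ((dA * F) * A - 2 * X * (dA * F) + 2 * Cx * Q ^ 2 * X * (dA * F) + 2 * (dA * F))
       = ((1 - Q) * dA * (A - 2 * X + 2)) * F + 2 * Cx * Q ^ 2 * X * (1 - Q) * dA * F"
    by (simp add: algebra_simps power2_eq_square)
  also have "\<dots> = 2 * Q * (A - dA) * F + 2 * Cx * Q ^ 2 * X * (1 - Q) * dA * F"
    by (simp only: K)
  also have "\<dots> = 2 * Q * (A - dA) * F + 2 * Q * dA * ((1 - Q) * (Q * Cx * X) * F)"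
    by (simp add: algebra_simps power2_eq_square)
  also have "\<dots> = 2 * Q * (A - dA) * F + 2 * Q * dA * (F - dF)"
    by (simp only: Fid)
  also have "\<dots> = 2 * Q * (A * F - dA * dF)"
    by (simp add: algebra_simps)
  finally show ?thesis .
qed

lemma fps_main:
  fixes x :: real
  assumes q: "0 < q" "q < 1"
  defines "P \<equiv> AA q * dil x (EE q)" and "P' \<equiv> AA q * dil (q * x) (EE q)"
  shows "(1 - fps_const q) * (dil q P * AA q - 2 * fps_X * dil q P
            + 2 * fps_const x * fps_const q ^ 2 * fps_X * dil q P + 2 * dil q P)
         = 2 * fps_const q * (P' - dil q P')"
proof -
  define A where "A = AA q"
  define E where "E = EE q"
  define Q where "Q = fps_const q"
  define dA where "dA = dil q A"
  define F where "F = dil (q * x) E"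
  have h1: "A * (E + 1) = 2 * fps_X" unfolding A_def E_def by (rule AA_mult[OF q])
  have h2: "dA * (dil q E + 1) = 2 * (Q * fps_X)"
  proof -
    have "dil q (A * (E + 1)) = dil q (2 * fps_X)" using h1 by simp
    then show ?thesis unfolding dA_def Q_def
      by (simp add: dil_mult dil_add dil_one dil_X numeral_fps_const dil_const)
  qed
  have h3: "E - dil q E = (1 - Q) * fps_X * E" unfolding E_def Q_def by (rule EE_qdiff[OF q])
  have nz: "(E + 1) * (dil q E + 1) \<noteq> 0"
  proof -
    have "fps_nth ((E + 1) * (dil q E + 1)) 0 = 4" by (simp add: E_def EE_0)
    then show ?thesis by (metis fps_zero_nth zero_neq_numeral)
  qed
  have K: "(1 - Q) * dA * (A - 2 * fps_X + 2) = 2 * Q * (A - dA)"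
    by (rule K_alg[OF h1 h2 h3 refl refl nz])
  have Fid: "F - dil q F = (1 - Q) * (Q * fps_const x * fps_X) * F"
  proof -
    have "dil (q * x) (E - dil q E) = dil (q * x) ((1 - Q) * fps_X * E)" using h3 by simp
    moreover have "dil (q * x) (dil q E) = dil q F" unfolding F_def by (simp add: dil_dil mult_ac)
    ultimately show ?thesis unfolding F_def Q_def
      by (simp add: dil_diff dil_mult dil_one dil_const dil_X mult_ac)
  qed
  have e1: "dil q P = dA * F" unfolding P_def dA_def F_def A_def E_def
    by (simp add: dil_mult dil_dil)
  have e2: "P' = A * F" unfolding P'_def A_def F_def E_def ..
  have e3: "dil q P' = dA * dil q F" unfolding e2 dA_def by (simp add: dil_mult)
  show ?thesis unfolding e1 e3 unfolding e2 Q_def[symmetric] A_def[symmetric]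
    by (rule T_alg[OF K Fid])
qed

lemma final_alg:
  fixes q x S pm pn p' qi fm :: real
  assumes q: "q \<noteq> 0" "q \<noteq> 1"
    and eq: "(1 - q) * (S + q ^ m * pm - 2 * (q ^ m * pm) + 2 * x * q ^ 2 * (q ^ m * pm) + 2 * (q * q ^ m * pn))
             = 2 * q * (qi * (1 - q)) * p'"
  shows "1 / (2 * q) * (qi * fm * S) + qi * (x * q - 1 / (2 * q)) * q ^ m * (fm * pm)
         + q ^ m * (qi * fm * pn) - qi * (qi * fm * p') = 0"
proof -
  have eq': "S + q ^ m * pm - 2 * (q ^ m * pm) + 2 * x * q ^ 2 * (q ^ m * pm) + 2 * (q * q ^ m * pn)
             - 2 * q * qi * p' = 0"
  proof -
    have "(1 - q) * (S + q ^ m * pm - 2 * (q ^ m * pm) + 2 * x * q ^ 2 * (q ^ m * pm) + 2 * (q * q ^ m * pn)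
             - 2 * q * qi * p') = 0" using eq by (simp add: algebra_simps)
    then show ?thesis using q by simp
  qed
  have "1 / (2 * q) * (qi * fm * S) + qi * (x * q - 1 / (2 * q)) * q ^ m * (fm * pm)
         + q ^ m * (qi * fm * pn) - qi * (qi * fm * p')
        = qi * fm / (2 * q) * (S + q ^ m * pm - 2 * (q ^ m * pm) + 2 * x * q ^ 2 * (q ^ m * pm) + 2 * (q * q ^ m * pn)
             - 2 * q * qi * p')"
    using q by (simp add: field_simps power2_eq_square)
  then show ?thesis using eq' by simp
qed

theorem theorem7:
  fixes q x :: real and n :: nat
  assumes "0 < q" and "q < 1" and "1 \<le> n"
  shows "1 / (2 * q) * (\<Sum>k<n - 1. qbinom q n k * qgenocchi_num q (n - k) * q ^ k * qgenocchi_poly q k x)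
      + qint q n * (x * q - 1 / (2 * q)) * q ^ (n - 1) * qgenocchi_poly q (n - 1) x
      + q ^ (n - 1) * qgenocchi_poly q n x - qint q n * qgenocchi_poly q n (q * x) = 0"
proof -
  have q: "0 < q" "q < 1" using assms by auto
  obtain m where n: "n = Suc m" using assms(3) by (cases n) auto
  define A where "A = AA q"
  define P where "P = AA q * dil x (EE q)"
  define P' where "P' = AA q * dil (q * x) (EE q)"
  have gp: "\<And>k. qgenocchi_poly q k x = qfact q k * fps_nth P k"
    unfolding P_def by (rule poly_eq[OF q])
  have gp': "qgenocchi_poly q n (q * x) = qfact q n * fps_nth P' n"
    unfolding P'_def by (rule poly_eq[OF q])
  have gn: "\<And>k. qgenocchi_num q k = qfact q k * fps_nth A k"
    unfolding A_def using num_eq[OF q] by simp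
  have hA: "A * (EE q + 1) = 2 * fps_X" unfolding A_def by (rule AA_mult[OF q])
  have A0: "fps_nth A 0 = 0"
    using arg_cong[OF hA, of "\<lambda>F. fps_nth F 0"] by (simp add: EE_0)
  have A1: "fps_nth A 1 = 1"
    using arg_cong[OF hA, of "\<lambda>F. fps_nth F 1"] A0 by (simp add: fps_mult_nth EE_0)
  have M: "fps_nth ((1 - fps_const q) * (dil q P * A - 2 * fps_X * dil q P
            + 2 * fps_const x * fps_const q ^ 2 * fps_X * dil q P + 2 * dil q P)) n
         = fps_nth (2 * fps_const q * (P' - dil q P')) n"
    using fps_main[OF q, of x] unfolding A_def P_def P'_def by simp
  have L: "fps_nth ((1 - fps_const q) * W) n = (1 - q) * fps_nth W n" for W :: "real fps"
  proof -
    have "(1 - fps_const q) * W = W - fps_const q * W" by (simp add: algebra_simps)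
    then show ?thesis by (simp add: algebra_simps)
  qed
  have R: "fps_nth (2 * fps_const q * (P' - dil q P')) n = 2 * q * (1 - q ^ n) * fps_nth P' n"
  proof -
    have "2 * fps_const q * (P' - dil q P') = fps_const (2 * q) * (P' - dil q P')"
      by (simp add: numeral_fps_const)
    then show ?thesis
      by (simp only: fps_mult_left_const_nth fps_sub_nth dil_nth) (simp add: algebra_simps)
  qed
  have c1: "fps_nth (dil q P * A) n = (\<Sum>i<m. q ^ i * fps_nth P i * fps_nth A (n - i)) + q ^ m * fps_nth P m"
    unfolding n fps_mult_nth
    by (simp add: sum.atLeast0_atMost_Suc atLeast0AtMost lessThan_Suc_atMost[symmetric] A0 A1[simplified])
  have c2: "fps_nth (2 * fps_X * dil q P) n = 2 * (q ^ m * fps_nth P m)"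
    unfolding n by (simp add: mult.assoc)
  have c3: "fps_nth (2 * fps_const x * fps_const q ^ 2 * fps_X * dil q P) n = 2 * x * q ^ 2 * (q ^ m * fps_nth P m)"
    unfolding n by (simp add: mult.assoc)
  have c4: "fps_nth (2 * dil q P) n = 2 * (q ^ n * fps_nth P n)"
    by simp
  have qin: "1 - q ^ n = qint q n * (1 - q)"
    using q by (simp add: qint_def)
  have eq: "(1 - q) * ((\<Sum>i<m. q ^ i * fps_nth P i * fps_nth A (n - i)) + q ^ m * fps_nth P m
       - 2 * (q ^ m * fps_nth P m) + 2 * x * q ^ 2 * (q ^ m * fps_nth P m) + 2 * (q * q ^ m * fps_nth P n))
       = 2 * q * (qint q n * (1 - q)) * fps_nth P' n"
  proof -
    note M2 = M[unfolded L fps_add_nth fps_sub_nth c1 c2 c3 c4 R qin]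
    show ?thesis using M2 unfolding n by (simp add: algebra_simps)
  qed
  have qfn: "qfact q n = qint q n * qfact q m" unfolding n by (rule qfact_Suc)
  have sumeq: "(\<Sum>k<n - 1. qbinom q n k * qgenocchi_num q (n - k) * q ^ k * qgenocchi_poly q k x)
      = qint q n * qfact q m * (\<Sum>i<m. q ^ i * fps_nth P i * fps_nth A (n - i))"
    unfolding sum_distrib_left
  proof (rule sum.cong)
    fix k assume "k \<in> {..<m}"
    show "qbinom q n k * qgenocchi_num q (n - k) * q ^ k * qgenocchi_poly q k x =
          qint q n * qfact q m * (q ^ k * fps_nth P k * fps_nth A (n - k))"
      unfolding gn gp qbinom_def qfn[symmetric] using qfact_nz[OF q, of k] qfact_nz[OF q, of "n - k"]
      by (simp add: field_simps)
  qed (simp add: n)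
  show ?thesis
    unfolding sumeq unfolding gp gp' qfn
    using final_alg[OF _ _ eq, of "qfact q m"] q by (simp add: n mult_ac)
qed

end
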